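(* Let $G,H$ be non-discrete unimodular lcsc compactly generated groups, $(\Omega,X_G,X_H,\mu)$ a measure equivalence coupling with cocycle $\alpha\colon G\times X_H\to H$, and $\varphi\colon\mathbb{R}_+\to\mathbb{R}_+$ non-decreasing with $t\mapsto t/\varphi(t)$ non-decreasing. Let $f\in\mathrm{L}^1(H)$ with support of finite measure and assume $$C_\varphi:=\int_{S_G}\int_{X_H}\varphi\big(|\alpha(s^{-1},x)|_H\,\|\nabla^{\sup}_Hf\|_1\big)\,d\nu_H(x)\,d\lambda_G(s)<\infty.$$ Then $$\int_{X_G}\|\nabla^{\mathrm{int}}_Gf_x\|_1\,d\nu_G(x)\le C_\varphi\,\frac{2\|f\|_1}{\varphi(2\|f\|_1)}.$$
   Context: Measure equivalence coupling: measure space $(\Omega,\mu)$ with commuting measure-preserving $G$- and $H$-actions (written $\ast$), subsets $X_G,X_H$ with finite measures $\nu_G,\nu_H$ such that $(g,x)\mapsto g\ast x$ is a measure space isomorphism $(G\times X_G,\lambda_G\otimes\nu_G)\to(\Omega,\mu)$ and likewise for $H\times X_H$. $\alpha(g,x)\ast g\ast x$ is the unique point of $(H\ast g\ast x)\cap X_H$. $S_G,S_H$ compact generating sets, $|\cdot|_H$ word length, $\lambda(s)u(g)=u(s^{-1}g)$, $\|\nabla^{\mathrm{int}}_Gu\|_1=\int_{S_G}\|u-\lambda(s)u\|_1\,d\lambda_G(s)$, $\|\nabla^{\sup}_Hf\|_1=\sup_{s\in S_H}\|f-\lambda(s)f\|_1$. Given $f\colon H\to\mathbb{R}$: $\tilde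 f(h\ast x)=f(h^{-1})$ ($h\in H,x\in X_H$), $f_x(g)=\tilde f(g\ast x)$ ($x\in X_G$). *)

theory Defs
  imports "HOL-Analysis.Analysis" "HOL-Probability.Probability"
begin

text \<open>Groups are written additively (class group_add is not assumed commutative):
  the product g h is g + h, the inverse of g is - g, the identity is 0.\<close>

definition lcsc_group :: "'g::{topological_group_add, t2_space, second_countable_topology} itself \<Rightarrow> bool" where
  "lcsc_group _ \<longleftrightarrow> locally_compact_space (euclidean :: 'g topology)"

definition non_discrete :: "'g::topological_space itself \<Rightarrow> bool" where
  "non_discrete _ \<longleftrightarrow> (\<exists>x::'g. \<not> open {x})"

definition haar_measure :: "'g::topological_group_add measure \<Rightarrow> bool" where
  "haar_measure M \<longleftrightarrow> sets M = sets borel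
     \<and> (\<forall>g. \<forall>A\<in>sets borel. emeasure M ((\<lambda>x. g + x) ` A) = emeasure M A)
     \<and> (\<forall>K. compact K \<longrightarrow> emeasure M K < \<infinity>)
     \<and> (\<forall>U. open U \<and> U \<noteq> {} \<longrightarrow> emeasure M U > 0)"

definition unimodular_haar :: "'g::topological_group_add measure \<Rightarrow> bool" where
  "unimodular_haar M \<longleftrightarrow> haar_measure M
     \<and> (\<forall>g. \<forall>A\<in>sets borel. emeasure M ((\<lambda>x. x + g) ` A) = emeasure M A)"

fun words :: "'a::group_add set \<Rightarrow> nat \<Rightarrow> 'a set" where
  "words S 0 = {0}"
| "words S (Suc n) = words S n \<union> {s + w | s w. s \<in> S \<union> uminus ` S \<and> w \<in> words S n}"

definition compact_generating_set :: "'a::{group_add, topological_space} set \<Rightarrow> bool" where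
  "compact_generating_set S \<longleftrightarrow> compact S \<and> (\<forall>g. \<exists>n. g \<in> words S n)"

definition word_length :: "'a::group_add set \<Rightarrow> 'a \<Rightarrow> nat" where
  "word_length S h = (LEAST n. h \<in> words S n)"

definition meas_iso :: "'a measure \<Rightarrow> 'b measure \<Rightarrow> ('a \<Rightarrow> 'b) \<Rightarrow> bool" where
  "meas_iso M N T \<longleftrightarrow> bij_betw T (space M) (space N) \<and> T \<in> M \<rightarrow>\<^sub>M N
     \<and> the_inv_into (space M) T \<in> N \<rightarrow>\<^sub>M M \<and> distr M N T = N"

definition mp_action :: "'w measure \<Rightarrow> ('g::group_add \<Rightarrow> 'w \<Rightarrow> 'w) \<Rightarrow> bool" where
  "mp_action \<mu> act \<longleftrightarrow>
     (\<forall>w\<in>space \<mu>. act 0 w = w)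
   \<and> (\<forall>g1 g2. \<forall>w\<in>space \<mu>. act (g1 + g2) w = act g1 (act g2 w))
   \<and> (\<forall>g. act g \<in> \<mu> \<rightarrow>\<^sub>M \<mu> \<and> distr \<mu> \<mu> (act g) = \<mu>)"

text \<open>Measure equivalence coupling (\<Omega>, X_G, X_H, \<mu>) with \<Omega> = space \<mu>,
  X_G = space \<nu>G, X_H = space \<nu>H.\<close>
definition me_coupling ::
  "'g::topological_group_add measure \<Rightarrow> 'h::topological_group_add measure \<Rightarrow> 'w measure
   \<Rightarrow> ('g \<Rightarrow> 'w \<Rightarrow> 'w) \<Rightarrow> ('h \<Rightarrow> 'w \<Rightarrow> 'w) \<Rightarrow> 'w measure \<Rightarrow> 'w measure \<Rightarrow> bool" where
  "me_coupling lamG lamH \<mu> actG actH \<nu>G \<nu>H \<longleftrightarrow>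
     mp_action \<mu> actG \<and> mp_action \<mu> actH
   \<and> (\<forall>g h. \<forall>w\<in>space \<mu>. actG g (actH h w) = actH h (actG g w))
   \<and> finite_measure \<nu>G \<and> finite_measure \<nu>H
   \<and> space \<nu>G \<subseteq> space \<mu> \<and> space \<nu>H \<subseteq> space \<mu>
   \<and> meas_iso (lamG \<Otimes>\<^sub>M \<nu>G) \<mu> (\<lambda>(g, x). actG g x)
   \<and> meas_iso (lamH \<Otimes>\<^sub>M \<nu>H) \<mu> (\<lambda>(h, x). actH h x)"

text \<open>Cocycle: \<alpha>(g,x) * g * x is the unique point of (H * g * x) \<inter> X_H.\<close>
definition cocycle :: "('g \<Rightarrow> 'w \<Rightarrow> 'w) \<Rightarrow> ('h \<Rightarrow> 'w \<Rightarrow> 'w) \<Rightarrow> 'w set \<Rightarrow> 'g \<Rightarrow> 'w \<Rightarrow> 'h" where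
  "cocycle actG actH XH g x = (THE h. actH h (actG g x) \<in> XH)"

definition ftilde :: "('h::group_add \<Rightarrow> 'w \<Rightarrow> 'w) \<Rightarrow> 'w set \<Rightarrow> ('h \<Rightarrow> real) \<Rightarrow> 'w \<Rightarrow> real" where
  "ftilde actH XH f w = f (- (THE h. \<exists>x\<in>XH. w = actH h x))"

definition fx :: "('g \<Rightarrow> 'w \<Rightarrow> 'w) \<Rightarrow> ('h::group_add \<Rightarrow> 'w \<Rightarrow> 'w) \<Rightarrow> 'w set \<Rightarrow> ('h \<Rightarrow> real) \<Rightarrow> 'w \<Rightarrow> 'g \<Rightarrow> real" where
  "fx actG actH XH f x g = ftilde actH XH f (actG g x)"

definition L1norm :: "'a measure \<Rightarrow> ('a \<Rightarrow> real) \<Rightarrow> ennreal" where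
  "L1norm M u = (\<integral>\<^sup>+ x. ennreal \<bar>u x\<bar> \<partial>M)"

definition ltrans :: "'a::group_add \<Rightarrow> ('a \<Rightarrow> real) \<Rightarrow> 'a \<Rightarrow> real" where
  "ltrans s u g = u (- s + g)"

definition grad_int :: "'a::group_add measure \<Rightarrow> 'a set \<Rightarrow> ('a \<Rightarrow> real) \<Rightarrow> ennreal" where
  "grad_int M S u = (\<integral>\<^sup>+ s \<in> S. L1norm M (\<lambda>g. u g - ltrans s u g) \<partial>M)"

definition grad_sup :: "'a::group_add measure \<Rightarrow> 'a set \<Rightarrow> ('a \<Rightarrow> real) \<Rightarrow> ennreal" where
  "grad_sup M S f = (SUP s\<in>S. L1norm M (\<lambda>g. f g - ltrans s f g))"

end

theory Submission
  imports Defs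
begin


lemma meas_borelI:
  assumes "sets M = sets borel" "sets N = sets borel" "f \<in> borel_measurable borel"
  shows "f \<in> M \<rightarrow>\<^sub>M N"
  using measurable_cong_sets[OF assms(1,2)] assms(3) by blast
lemma sets_borel_space: "sets M = sets borel \<Longrightarrow> space M = UNIV"
  by (metis sets_eq_imp_space_eq space_borel)

lemma haar_distr_left:
  fixes M :: "'g::{topological_group_add} measure"
  assumes H: "haar_measure M"
  shows "distr M M (\<lambda>x. g + x) = M"
proof (rule measure_eqI)
  have S: "sets M = sets borel" using H by (simp add: haar_measure_def)
  have inv: "\<forall>g. \<forall>A\<in>sets borel. emeasure M ((\<lambda>x. g + x) ` A) = emeasure M A"
    using H unfolding haar_measure_def by blast
  have m: "(\<lambda>x. g + x) \<in> M \<rightarrow>\<^sub>M M"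
    by (rule meas_borelI[OF S S]) (intro borel_measurable_continuous_onI continuous_intros)
  show "sets (distr M M ((+) g)) = sets M" by simp
  fix A assume "A \<in> sets (distr M M ((+) g))"
  then have A: "A \<in> sets borel" "A \<in> sets M" using S by auto
  have e: "(\<lambda>x. g + x) -` A \<inter> space M = (\<lambda>x. -g + x) ` A"
  proof -
    have "(\<lambda>x. g + x) -` A = (\<lambda>x. -g + x) ` A"
    proof (intro set_eqI iffI)
      fix x assume "x \<in> (\<lambda>x. g + x) -` A"
      then show "x \<in> (\<lambda>x. -g + x) ` A" by (intro image_eqI[of _ _ "g + x"]) (auto simp: add.assoc[symmetric])
    qed (auto simp: add.assoc[symmetric])
    then show ?thesis using sets_borel_space[OF S] by simp
  qed
  have "emeasure (distr M M ((+) g)) A = emeasure M ((\<lambda>x. g + x) -` A \<inter> space M)"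
    by (rule emeasure_distr[OF m A(2)])
  also have "\<dots> = emeasure M A" unfolding e using inv A(1) by blast
  finally show "emeasure (distr M M ((+) g)) A = emeasure M A" .
qed

lemma sets_pair_borel:
  fixes M :: "'a::second_countable_topology measure" and N :: "'b::second_countable_topology measure"
  assumes "sets M = sets borel" "sets N = sets borel"
  shows "sets (M \<Otimes>\<^sub>M N) = sets borel"
  using sets_pair_measure_cong[OF assms] borel_prod by metis

lemma haar_sets: "haar_measure M \<Longrightarrow> sets M = sets borel"
  unfolding haar_measure_def by (erule conjunct1)

lemma unimod_haar: "unimodular_haar M \<Longrightarrow> haar_measure M"
  unfolding unimodular_haar_def by (erule conjunct1)

lemma haar_distr_right:
  fixes M :: "'g::{topological_group_add} measure"
  assumes H: "unimodular_haar M"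
  shows "distr M M (\<lambda>x. x + g) = M"
proof (rule measure_eqI)
  have S: "sets M = sets borel" using haar_sets unimod_haar H by blast
  have inv: "\<forall>g. \<forall>A\<in>sets borel. emeasure M ((\<lambda>x. x + g) ` A) = emeasure M A"
    using H unfolding unimodular_haar_def by (rule conjunct2)
  have m: "(\<lambda>x. x + g) \<in> M \<rightarrow>\<^sub>M M"
    by (rule meas_borelI[OF S S]) (intro borel_measurable_continuous_onI continuous_intros)
  show "sets (distr M M (\<lambda>x. x + g)) = sets M" by simp
  fix A assume "A \<in> sets (distr M M (\<lambda>x. x + g))"
  then have A: "A \<in> sets borel" "A \<in> sets M" using S by auto
  have e: "(\<lambda>x. x + g) -` A \<inter> space M = (\<lambda>x. x + -g) ` A"
  proof -
    have "(\<lambda>x. x + g) -` A = (\<lambda>x. x + -g) ` A"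
    proof (intro set_eqI iffI)
      fix x assume "x \<in> (\<lambda>x. x + g) -` A"
      then show "x \<in> (\<lambda>x. x + -g) ` A" by (intro image_eqI[of _ _ "x + g"]) (auto simp: add.assoc)
    qed (auto simp: add.assoc)
    then show ?thesis using sets_borel_space[OF S] by simp
  qed
  have "emeasure (distr M M (\<lambda>x. x + g)) A = emeasure M ((\<lambda>x. x + g) -` A \<inter> space M)"
    by (rule emeasure_distr[OF m A(2)])
  also have "\<dots> = emeasure M A" unfolding e using inv A(1) by blast
  finally show "emeasure (distr M M (\<lambda>x. x + g)) A = emeasure M A" .
qed

lemma nn_distr_gen:
  assumes D: "distr M M T = M" and S: "sets M = sets borel" and T: "T \<in> borel_measurable borel"
    and F: "F \<in> borel_measurable borel"
  shows "(\<integral>\<^sup>+x. F (T x) \<partial>M) = (\<integral>\<^sup>+x. F x \<partial>M)"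
proof -
  have m: "T \<in> M \<rightarrow>\<^sub>M M" by (rule meas_borelI[OF S S T])
  have F': "F \<in> borel_measurable M" using F measurable_cong_sets[OF S refl] by blast
  have "(\<integral>\<^sup>+x. F x \<partial>M) = (\<integral>\<^sup>+x. F x \<partial>(distr M M T))"
    using D by simp
  also have "\<dots> = (\<integral>\<^sup>+x. F (T x) \<partial>M)"
    by (rule nn_integral_distr[OF m]) (use F' in simp)
  finally show ?thesis by simp
qed

lemma haar_nn_left:
  fixes M :: "'g::{topological_group_add} measure"
  assumes H: "haar_measure M" and F: "F \<in> borel_measurable borel"
  shows "(\<integral>\<^sup>+x. F (g + x) \<partial>M) = (\<integral>\<^sup>+x. F x \<partial>M)"
  by (rule nn_distr_gen[OF haar_distr_left[OF H] haar_sets[OF H] _ F])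
     (intro borel_measurable_continuous_onI continuous_intros)

lemma haar_nn_right:
  fixes M :: "'g::{topological_group_add} measure"
  assumes H: "unimodular_haar M" and F: "F \<in> borel_measurable borel"
  shows "(\<integral>\<^sup>+x. F (x + g) \<partial>M) = (\<integral>\<^sup>+x. F x \<partial>M)"
  by (rule nn_distr_gen[OF haar_distr_right[OF H] haar_sets[OF unimod_haar[OF H]] _ F])
     (intro borel_measurable_continuous_onI continuous_intros)

lemma lc_cover:
  fixes x :: "'g::{topological_space}"
  assumes "locally_compact_space (euclidean :: 'g topology)"
  obtains U K where "open U" "compact K" "x \<in> U" "U \<subseteq> K"
proof -
  have "\<exists>U K. openin euclidean U \<and> compactin euclidean K \<and> x \<in> U \<and> U \<subseteq> K"
    using assms unfolding locally_compact_space_def by simp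
  then show ?thesis using that by (metis compactin_euclidean_iff open_openin)
qed

lemma haar_sigma_finite:
  fixes M :: "'g::{topological_group_add, t2_space, second_countable_topology} measure"
  assumes H: "haar_measure M" and L: "locally_compact_space (euclidean :: 'g topology)"
  shows "sigma_finite_measure M"
proof
  have S: "sets M = sets borel" using haar_sets[OF H] .
  have fin: "\<forall>K. compact K \<longrightarrow> emeasure M K < \<infinity>" using H unfolding haar_measure_def by (elim conjE)
  define F where "F = {U::'g set. open U \<and> (\<exists>K. compact K \<and> U \<subseteq> K)}"
  have oF: "\<And>U. U \<in> F \<Longrightarrow> open U" unfolding F_def by simp
  obtain F' where F': "F' \<subseteq> F" "countable F'" "\<Union>F' = \<Union>F"
    by (rule Lindelof[of F, OF oF])
  have UF: "\<Union>F = UNIV"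
  proof -
    { fix x :: 'g obtain U K where "open U" "compact K" "x \<in> U" "U \<subseteq> K" by (rule lc_cover[OF L])
      then have "U \<in> F" unfolding F_def by blast
      then have "x \<in> \<Union>F" using \<open>x \<in> U\<close> by blast }
    then show ?thesis by blast
  qed
  have cc: "compact (closure U)" if "U \<in> F'" for U
  proof -
    have "U \<in> F" using that F'(1) by blast
    then obtain K where K: "compact K" "U \<subseteq> K" unfolding F_def by blast
    then have "closure U \<subseteq> K" by (simp add: closure_minimal compact_imp_closed)
    then show ?thesis using K compact_Int_closed[of K "closure U"] by (simp add: Int_absorb1)
  qed
  show "\<exists>A. countable A \<and> A \<subseteq> sets M \<and> \<Union> A = space M \<and> (\<forall>a\<in>A. emeasure M a \<noteq> \<infinity>)"
  proof (intro exI[of _ "closure ` F'"] conjI)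
    show "countable (closure ` F')" by (rule countable_image[OF F'(2)])
    show "closure ` F' \<subseteq> sets M"
    proof
      fix a assume "a \<in> closure ` F'"
      then have "closed a" by blast
      then have "a \<in> sets borel" by (rule borel_closed)
      then show "a \<in> sets M" using S by simp
    qed
    have "\<Union> (closure ` F') = UNIV"
    proof -
      { fix x :: 'g
        have "x \<in> \<Union>F'" using F'(3) UF by simp
        then obtain U where "U \<in> F'" "x \<in> U" by blast
        then have "x \<in> \<Union> (closure ` F')" using closure_subset[of U] by blast }
      then show ?thesis by blast
    qed
    then show "\<Union> (closure ` F') = space M" using sets_borel_space[OF S] by simp
    show "\<forall>a\<in>closure ` F'. emeasure M a \<noteq> \<infinity>"
    proof
      fix a assume "a \<in> closure ` F'"
      then obtain U where "U \<in> F'" "a = closure U" by blast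
      then have "emeasure M a < \<infinity>" using cc fin by simp
      then show "emeasure M a \<noteq> \<infinity>" by simp
    qed
  qed
qed




lemma borel_measurable_uminus_grp[measurable (raw)]:
  fixes f :: "'a \<Rightarrow> 'b::{topological_group_add}"
  assumes "f \<in> borel_measurable M"
  shows "(\<lambda>x. - f x) \<in> borel_measurable M"
proof -
  have "(uminus :: 'b \<Rightarrow> 'b) \<in> borel_measurable borel"
    by (intro borel_measurable_continuous_onI continuous_intros)
  then show ?thesis using measurable_compose[OF assms] by blast
qed

lemma borel_measurable_add_grp[measurable (raw)]:
  fixes f g :: "'a \<Rightarrow> 'b::{topological_group_add, second_countable_topology}"
  assumes "f \<in> borel_measurable M" "g \<in> borel_measurable M"
  shows "(\<lambda>x. f x + g x) \<in> borel_measurable M"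
  using borel_measurable_add[OF assms] .

lemma fst_borel: "sets M = sets borel \<Longrightarrow> fst \<in> borel_measurable (M \<Otimes>\<^sub>M N)"
  using measurable_fst by (metis measurable_cong_sets sets_pair_measure_cong)

lemma snd_borel: "sets N = sets borel \<Longrightarrow> snd \<in> borel_measurable (M \<Otimes>\<^sub>M N)"
  using measurable_snd by (metis measurable_cong_sets sets_pair_measure_cong)

lemma pair_sf: "sigma_finite_measure M \<Longrightarrow> sigma_finite_measure N \<Longrightarrow> pair_sigma_finite M N"
  unfolding pair_sigma_finite_def by (rule conjI)

lemma haar_distr_uminus:
  fixes M :: "'g::{topological_group_add, t2_space, second_countable_topology} measure"
  assumes H: "unimodular_haar M" and L: "locally_compact_space (euclidean :: 'g topology)"
  shows "distr M M uminus = M"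
proof -
  have H0: "haar_measure M" using unimod_haar[OF H] .
  have S: "sets M = sets borel" using haar_sets[OF H0] .
  have SP: "sets (M \<Otimes>\<^sub>M M) = sets borel" using sets_pair_borel[OF S S] .
  have SF: "sigma_finite_measure M" using haar_sigma_finite[OF H0 L] .
  interpret P: pair_sigma_finite M M using pair_sf[OF SF SF] .
  have fin: "\<forall>K. compact K \<longrightarrow> emeasure M K < \<infinity>" using H0 unfolding haar_measure_def by (elim conjE)
  have pos: "\<forall>U. open U \<and> U \<noteq> {} \<longrightarrow> emeasure M U > 0" using H0 unfolding haar_measure_def by (elim conjE)
  obtain U K where UK: "open U" "compact K" "(0::'g) \<in> U" "U \<subseteq> K" by (rule lc_cover[OF L])
  have U: "U \<in> sets borel" using UK(1) by simp
  have Upos: "emeasure M U > 0" using pos UK by blast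
  have "emeasure M U \<le> emeasure M K"
    by (rule emeasure_mono[OF UK(4)]) (use borel_closed[OF compact_imp_closed[OF UK(2)]] S in simp)
  then have Ufin: "emeasure M U < \<infinity>" using fin UK(2) by (meson order_le_less_trans)
  have um: "(uminus :: 'g \<Rightarrow> 'g) \<in> M \<rightarrow>\<^sub>M M"
    by (rule meas_borelI[OF S S]) (intro borel_measurable_continuous_onI continuous_intros)
  show ?thesis
  proof (rule measure_eqI)
    show "sets (distr M M uminus) = sets M" by simp
    fix A assume "A \<in> sets (distr M M uminus)"
    then have A: "A \<in> sets borel" "A \<in> sets M" using S by auto
    define F where "F = (\<lambda>x y. indicator U (x + y) * indicator A (- y) :: ennreal)"
    have Fm: "case_prod F \<in> borel_measurable (M \<Otimes>\<^sub>M M)"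
    proof -
      note [measurable] = fst_borel[OF S, of M] snd_borel[OF S, of M]
      show ?thesis unfolding F_def split_beta' using U A(1) by measurable
    qed
    have e1: "(\<integral>\<^sup>+y. (\<integral>\<^sup>+x. F x y \<partial>M) \<partial>M) = emeasure M U * emeasure M (uminus -` A)"
    proof -
      have "(\<integral>\<^sup>+x. F x y \<partial>M) = emeasure M U * indicator (uminus -` A) y" for y
      proof -
        have "(\<integral>\<^sup>+x. F x y \<partial>M) = (\<integral>\<^sup>+x. indicator U (x + y) \<partial>M) * indicator A (- y)"
          unfolding F_def by (rule nn_integral_multc) (use U S in measurable)
        also have "(\<integral>\<^sup>+x. indicator U (x + y) \<partial>M) = (\<integral>\<^sup>+x. indicator U x \<partial>M)"
          by (rule haar_nn_right[OF H]) (use U in measurable)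
        also have "\<dots> = emeasure M U" using U S by simp
        finally show ?thesis by (simp add: indicator_def)
      qed
      then have "(\<integral>\<^sup>+y. (\<integral>\<^sup>+x. F x y \<partial>M) \<partial>M) = (\<integral>\<^sup>+y. emeasure M U * indicator (uminus -` A) y \<partial>M)"
        by simp
      also have "\<dots> = emeasure M U * emeasure M (uminus -` A)"
      proof -
        have "uminus -` A \<in> sets M" using measurable_sets[OF um A(2)] sets_borel_space[OF S] by simp
        then show ?thesis by (simp add: nn_integral_cmult_indicator)
      qed
      finally show ?thesis .
    qed
    have e2: "(\<integral>\<^sup>+x. (\<integral>\<^sup>+y. F x y \<partial>M) \<partial>M) = emeasure M U * emeasure M A"
    proof -
      have i1: "(\<integral>\<^sup>+y. F x y \<partial>M) = (\<integral>\<^sup>+y. indicator U y * indicator A (- y + x) \<partial>M)" for x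
      proof -
        have "(\<integral>\<^sup>+y. F x y \<partial>M) = (\<integral>\<^sup>+y. F x (- x + y) \<partial>M)"
          by (rule haar_nn_left[OF H0, symmetric]) (unfold F_def, use U A in measurable)
        also have "\<dots> = (\<integral>\<^sup>+y. indicator U y * indicator A (- y + x) \<partial>M)"
          unfolding F_def by (simp add: add.assoc[symmetric] minus_add)
        finally show ?thesis .
      qed
      have "(\<integral>\<^sup>+x. (\<integral>\<^sup>+y. F x y \<partial>M) \<partial>M) = (\<integral>\<^sup>+x. (\<integral>\<^sup>+y. indicator U y * indicator A (- y + x) \<partial>M) \<partial>M)"
        using i1 by simp
      also have "\<dots> = (\<integral>\<^sup>+y. (\<integral>\<^sup>+x. indicator U y * indicator A (- y + x) \<partial>M) \<partial>M)"
      proof (rule P.Fubini'[symmetric])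
        note [measurable] = fst_borel[OF S, of M] snd_borel[OF S, of M]
        show "(\<lambda>(x,y). indicator U y * indicator A (- y + x) :: ennreal) \<in> borel_measurable (M \<Otimes>\<^sub>M M)"
          unfolding split_beta' using U A(1) by measurable
      qed
      also have "\<dots> = (\<integral>\<^sup>+y. indicator U y * emeasure M A \<partial>M)"
      proof (rule nn_integral_cong)
        fix y
        have "(\<integral>\<^sup>+x. indicator U y * indicator A (- y + x) \<partial>M) = indicator U y * (\<integral>\<^sup>+x. indicator A (- y + x) \<partial>M)"
          by (rule nn_integral_cmult) (use A S in measurable)
        also have "(\<integral>\<^sup>+x. indicator A (- y + x) \<partial>M) = (\<integral>\<^sup>+x. indicator A x \<partial>M)"
          by (rule haar_nn_left[OF H0]) (use A in measurable)
        also have "\<dots> = emeasure M A" using A by simp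
        finally show "(\<integral>\<^sup>+x. indicator U y * indicator A (- y + x) \<partial>M) = indicator U y * emeasure M A" .
      qed
      also have "\<dots> = emeasure M U * emeasure M A"
        using U S by (simp add: nn_integral_multc mult.commute)
      finally show ?thesis .
    qed
    have "emeasure M U * emeasure M (uminus -` A) = emeasure M U * emeasure M A"
      using e1 e2 P.Fubini'[OF Fm] by simp
    then have "emeasure M U = \<top> \<and> emeasure M (uminus -` A) \<noteq> 0 \<and> emeasure M A \<noteq> 0 \<or>
      emeasure M U = 0 \<or> emeasure M (uminus -` A) = emeasure M A" by (simp add: ennreal_mult_cancel_left)
    then have "emeasure M (uminus -` A) = emeasure M A"
      using Upos Ufin by auto
    then show "emeasure (distr M M uminus) A = emeasure M A"
      using emeasure_distr[OF um A(2)] sets_borel_space[OF S] by simp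
  qed
qed




definition Qf :: "'a::group_add measure \<Rightarrow> ('a \<Rightarrow> real) \<Rightarrow> 'a \<Rightarrow> ennreal" where
  "Qf M f h = (\<integral>\<^sup>+k. ennreal \<bar>f k - f (h + k)\<bar> \<partial>M)"

lemma Qf_meas:
  fixes M :: "'g::{topological_group_add, second_countable_topology} measure"
  assumes S: "sets M = sets borel" and f: "f \<in> borel_measurable borel"
  shows "(\<lambda>k. ennreal \<bar>f k - f (h + k)\<bar>) \<in> borel_measurable M"
proof -
  have "(\<lambda>k. ennreal \<bar>f k - f (h + k)\<bar>) \<in> borel_measurable borel" using f by measurable
  then show ?thesis using measurable_cong_sets[OF S refl] by blast
qed

lemma Qf_ltrans:
  "L1norm M (\<lambda>g. f g - ltrans s f g) = Qf M f (- s)"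
  unfolding L1norm_def Qf_def ltrans_def by simp

lemma Qf_zero: "Qf M f 0 = 0"
  unfolding Qf_def by simp

lemma Qf_neg:
  fixes M :: "'g::{topological_group_add, second_countable_topology} measure"
  assumes H: "haar_measure M" and f: "f \<in> borel_measurable borel"
  shows "Qf M f (- s) = Qf M f s"
proof -
  have "Qf M f (- s) = (\<integral>\<^sup>+k. ennreal \<bar>f (s + k) - f (- s + (s + k))\<bar> \<partial>M)"
    unfolding Qf_def by (rule haar_nn_left[OF H, symmetric]) (use f in measurable)
  also have "\<dots> = (\<integral>\<^sup>+k. ennreal \<bar>f k - f (s + k)\<bar> \<partial>M)"
    by (simp add: add.assoc[symmetric] abs_minus_commute)
  finally show ?thesis unfolding Qf_def .
qed

lemma Qf_add:
  fixes M :: "'g::{topological_group_add, second_countable_topology} measure"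
  assumes H: "haar_measure M" and f: "f \<in> borel_measurable borel"
  shows "Qf M f (s + w) \<le> Qf M f s + Qf M f w"
proof -
  have S: "sets M = sets borel" using haar_sets[OF H] .
  have "Qf M f (s + w) \<le> (\<integral>\<^sup>+k. ennreal \<bar>f k - f (w + k)\<bar> + ennreal \<bar>f (w + k) - f (s + (w + k))\<bar> \<partial>M)"
    unfolding Qf_def
  proof (rule nn_integral_mono)
    fix k
    have "\<bar>f k - f (s + w + k)\<bar> \<le> \<bar>f k - f (w + k)\<bar> + \<bar>f (w + k) - f (s + (w + k))\<bar>"
      by (simp add: add.assoc)
    then show "ennreal \<bar>f k - f (s + w + k)\<bar> \<le> ennreal \<bar>f k - f (w + k)\<bar> + ennreal \<bar>f (w + k) - f (s + (w + k))\<bar>"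
      by (simp add: ennreal_plus[symmetric] del: ennreal_plus)
  qed
  also have "\<dots> = Qf M f w + (\<integral>\<^sup>+k. ennreal \<bar>f (w + k) - f (s + (w + k))\<bar> \<partial>M)"
    unfolding Qf_def
  proof (rule nn_integral_add)
    show "(\<lambda>k. ennreal \<bar>f k - f (w + k)\<bar>) \<in> borel_measurable M" by (rule Qf_meas[OF S f])
    have "(\<lambda>k. ennreal \<bar>f (w + k) - f (s + (w + k))\<bar>) \<in> borel_measurable borel" using f by measurable
    then show "(\<lambda>k. ennreal \<bar>f (w + k) - f (s + (w + k))\<bar>) \<in> borel_measurable M"
      using measurable_cong_sets[OF S refl] by blast
  qed
  also have "(\<integral>\<^sup>+k. ennreal \<bar>f (w + k) - f (s + (w + k))\<bar> \<partial>M) = Qf M f s"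
    unfolding Qf_def by (rule haar_nn_left[OF H, where F = "\<lambda>k. ennreal \<bar>f k - f (s + k)\<bar>"]) (use f in measurable)
  finally show ?thesis by (simp add: add.commute)
qed

lemma Qf_S:
  fixes M :: "'g::{topological_group_add, second_countable_topology} measure"
  assumes H: "haar_measure M" and f: "f \<in> borel_measurable borel" and s: "s \<in> S \<union> uminus ` S"
  shows "Qf M f s \<le> grad_sup M S f"
proof -
  have b: "Qf M f (- t) \<le> grad_sup M S f" if "t \<in> S" for t
    unfolding grad_sup_def Qf_ltrans[symmetric] using that by (rule SUP_upper)
  show ?thesis
  proof (cases "s \<in> S")
    case True
    then have "Qf M f (- s) \<le> grad_sup M S f" by (rule b)
    then show ?thesis using Qf_neg[OF H f, of s] by simp
  next
    case False
    then obtain t where "t \<in> S" "s = - t" using s by blast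
    then show ?thesis using b by simp
  qed
qed

lemma Qf_words:
  fixes M :: "'g::{topological_group_add, second_countable_topology} measure"
  assumes H: "haar_measure M" and f: "f \<in> borel_measurable borel"
  shows "h \<in> words S n \<Longrightarrow> Qf M f h \<le> of_nat n * grad_sup M S f"
proof (induction n arbitrary: h)
  case 0
  then show ?case by (simp add: Qf_zero)
next
  case (Suc n)
  show ?case
  proof (cases "h \<in> words S n")
    case True
    then have "Qf M f h \<le> of_nat n * grad_sup M S f" using Suc.IH by blast
    also have "\<dots> \<le> of_nat (Suc n) * grad_sup M S f" by (intro mult_right_mono) auto
    finally show ?thesis .
  next
    case False
    then obtain s w where sw: "h = s + w" "s \<in> S \<union> uminus ` S" "w \<in> words S n"
      using Suc.prems by auto
    have "Qf M f h \<le> Qf M f s + Qf M f w" unfolding sw(1) by (rule Qf_add[OF H f])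
    also have "\<dots> \<le> grad_sup M S f + of_nat n * grad_sup M S f"
      by (intro add_mono Qf_S[OF H f sw(2)] Suc.IH sw(3))
    also have "\<dots> = of_nat (Suc n) * grad_sup M S f" by (simp add: algebra_simps)
    finally show ?thesis .
  qed
qed

lemma in_words_length:
  assumes "compact_generating_set S"
  shows "h \<in> words S (word_length S h)"
  using assms unfolding compact_generating_set_def word_length_def by (meson LeastI_ex)

lemma Qf_bound_len:
  fixes M :: "'g::{topological_group_add, second_countable_topology} measure"
  assumes H: "haar_measure M" and f: "f \<in> borel_measurable borel" and S: "compact_generating_set S"
  shows "Qf M f h \<le> of_nat (word_length S h) * grad_sup M S f"
  by (rule Qf_words[OF H f in_words_length[OF S]])

lemma Qf_bound_norm:
  fixes M :: "'g::{topological_group_add, second_countable_topology} measure"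
  assumes H: "haar_measure M" and f: "f \<in> borel_measurable borel"
  shows "Qf M f h \<le> 2 * (\<integral>\<^sup>+k. ennreal \<bar>f k\<bar> \<partial>M)"
proof -
  have S: "sets M = sets borel" using haar_sets[OF H] .
  have "Qf M f h \<le> (\<integral>\<^sup>+k. ennreal \<bar>f k\<bar> + ennreal \<bar>f (h + k)\<bar> \<partial>M)"
    unfolding Qf_def
  proof (rule nn_integral_mono)
    fix k
    have "\<bar>f k - f (h + k)\<bar> \<le> \<bar>f k\<bar> + \<bar>f (h + k)\<bar>" by simp
    then show "ennreal \<bar>f k - f (h + k)\<bar> \<le> ennreal \<bar>f k\<bar> + ennreal \<bar>f (h + k)\<bar>"
      by (simp add: ennreal_plus[symmetric] del: ennreal_plus)
  qed
  also have "\<dots> = (\<integral>\<^sup>+k. ennreal \<bar>f k\<bar> \<partial>M) + (\<integral>\<^sup>+k. ennreal \<bar>f (h + k)\<bar> \<partial>M)"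
  proof (rule nn_integral_add)
    have "(\<lambda>k. ennreal \<bar>f k\<bar>) \<in> borel_measurable borel" using f by measurable
    then show "(\<lambda>k. ennreal \<bar>f k\<bar>) \<in> borel_measurable M" using measurable_cong_sets[OF S refl] by blast
    have "(\<lambda>k. ennreal \<bar>f (h + k)\<bar>) \<in> borel_measurable borel" using f by measurable
    then show "(\<lambda>k. ennreal \<bar>f (h + k)\<bar>) \<in> borel_measurable M" using measurable_cong_sets[OF S refl] by blast
  qed
  also have "(\<integral>\<^sup>+k. ennreal \<bar>f (h + k)\<bar> \<partial>M) = (\<integral>\<^sup>+k. ennreal \<bar>f k\<bar> \<partial>M)"
    by (rule haar_nn_left[OF H, where F = "\<lambda>k. ennreal \<bar>f k\<bar>"]) (use f in measurable)
  finally show ?thesis by (simp add: mult_2)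
qed

lemma grad_sup_bound:
  fixes M :: "'g::{topological_group_add, second_countable_topology} measure"
  assumes H: "haar_measure M" and f: "f \<in> borel_measurable borel"
  shows "grad_sup M S f \<le> 2 * (\<integral>\<^sup>+k. ennreal \<bar>f k\<bar> \<partial>M)"
  unfolding grad_sup_def Qf_ltrans by (rule SUP_least) (rule Qf_bound_norm[OF H f])

lemma phi_ineq:
  fixes \<phi> :: "real \<Rightarrow> real"
  assumes p0: "\<forall>t\<ge>0. \<phi> t \<ge> 0" and p1: "\<forall>t>0. \<phi> t > 0"
    and m1: "mono_on {0..} \<phi>" and m2: "mono_on {0<..} (\<lambda>t. t / \<phi> t)"
    and a: "a \<ge> 0" and b: "b \<ge> 0"
  shows "min a b \<le> \<phi> a * (b / \<phi> b)"
proof (cases "b = 0")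
  case True
  then show ?thesis using a by simp
next
  case False
  then have b0: "b > 0" using b by simp
  then have pb: "\<phi> b > 0" using p1 by blast
  show ?thesis
  proof (cases "a \<le> b")
    case True
    show ?thesis
    proof (cases "a = 0")
      case True
      then show ?thesis using p0 b pb by simp
    next
      case False
      then have a0: "a > 0" using a by simp
      then have pa: "\<phi> a > 0" using p1 by blast
      have le: "a / \<phi> a \<le> b / \<phi> b" using m2 a0 b0 \<open>a \<le> b\<close> by (simp add: mono_on_def)
      have "\<phi> a * (a / \<phi> a) \<le> \<phi> a * (b / \<phi> b)" by (rule mult_left_mono[OF le]) (use pa in simp)
      moreover have "\<phi> a * (a / \<phi> a) = a" using pa by simp
      ultimately have "a \<le> \<phi> a * (b / \<phi> b)" by simp
      then show ?thesis using True by simp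
    qed
  next
    case False
    then have "\<phi> b \<le> \<phi> a" using m1 b by (simp add: mono_on_def)
    then have "\<phi> b * (b / \<phi> b) \<le> \<phi> a * (b / \<phi> b)" by (rule mult_right_mono) (use b pb in simp)
    moreover have "\<phi> b * (b / \<phi> b) = b" using pb by simp
    ultimately have "b \<le> \<phi> a * (b / \<phi> b)" by simp
    then show ?thesis using False by simp
  qed
qed




lemma nn_integral_multc_le:
  fixes c :: real
  assumes c: "c \<ge> 0"
  shows "(\<integral>\<^sup>+x. f x * ennreal c \<partial>M) \<le> (\<integral>\<^sup>+x. f x \<partial>M) * ennreal c"
proof (cases "c = 0")
  case True
  then show ?thesis by simp
next
  case False
  then have c0: "c > 0" using c by simp
  show ?thesis
    unfolding nn_integral_def[of M "\<lambda>x. f x * ennreal c"]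
  proof (rule SUP_least)
    fix g assume g: "g \<in> {g. simple_function M g \<and> g \<le> (\<lambda>x. f x * ennreal c)}"
    define g' where "g' = (\<lambda>x. ennreal (1 / c) * g x)"
    have sg': "simple_function M g'"
      unfolding g'_def using g simple_function_compose[of M g "\<lambda>v. ennreal (1/c) * v"] by (simp add: o_def)
    have cc: "ennreal c * ennreal (1 / c) = 1" using c0 by (simp add: ennreal_mult[symmetric] del: ennreal_mult)
    have le: "g' \<le> f"
    proof (rule le_funI)
      fix x
      have "g x \<le> f x * ennreal c" using g by (auto simp: le_fun_def)
      then have "ennreal (1 / c) * g x \<le> ennreal (1 / c) * (f x * ennreal c)" by (rule mult_left_mono) simp
      also have "\<dots> = f x * (ennreal c * ennreal (1 / c))" by (simp add: ac_simps)
      also have "\<dots> = f x" using cc by simp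
      finally show "g' x \<le> f x" unfolding g'_def .
    qed
    have "integral\<^sup>S M g = ennreal c * integral\<^sup>S M g'"
    proof -
      have "integral\<^sup>S M g = (\<integral>\<^sup>Sx. (ennreal c * ennreal (1 / c)) * g x \<partial>M)" using cc by simp
      also have "\<dots> = ennreal c * integral\<^sup>S M g'"
        unfolding g'_def mult.assoc by (rule simple_integral_mult) (use sg' g'_def in simp)
      finally show ?thesis .
    qed
    moreover have "integral\<^sup>S M g' \<le> integral\<^sup>N M f"
    proof -
      have "integral\<^sup>S M g' = integral\<^sup>N M g'" using nn_integral_eq_simple_integral[OF sg'] by simp
      also have "\<dots> \<le> integral\<^sup>N M f" using le by (intro nn_integral_mono) (simp add: le_fun_def)
      finally show ?thesis .
    qed
    ultimately have "integral\<^sup>S M g \<le> ennreal c * integral\<^sup>N M f" by (simp add: mult_left_mono)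
    then show "integral\<^sup>S M g \<le> (\<integral>\<^sup>+x. f x \<partial>M) * ennreal c"
      by (simp add: mult.commute)
  qed
qed

lemma fin_sf: "finite_measure M \<Longrightarrow> sigma_finite_measure M"
  by (rule finite_measure.axioms(1))




locale coup =
  fixes lamG :: "'g::{topological_group_add, t2_space, second_countable_topology} measure"
    and lamH :: "'h::{topological_group_add, t2_space, second_countable_topology} measure"
    and \<mu> \<nu>G \<nu>H :: "'w measure"
    and actG :: "'g \<Rightarrow> 'w \<Rightarrow> 'w" and actH :: "'h \<Rightarrow> 'w \<Rightarrow> 'w"
  assumes C: "me_coupling lamG lamH \<mu> actG actH \<nu>G \<nu>H"
    and SGb: "sets lamG = sets borel" and SHb: "sets lamH = sets borel"
    and sfG: "sigma_finite_measure lamG" and sfH: "sigma_finite_measure lamH"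
    and invH: "distr lamH lamH uminus = lamH"
begin

lemma mpG: "mp_action \<mu> actG" using C unfolding me_coupling_def by (elim conjE)
lemma mpH: "mp_action \<mu> actH" using C unfolding me_coupling_def by (elim conjE)
lemma comm: "w \<in> space \<mu> \<Longrightarrow> actG g (actH h w) = actH h (actG g w)"
proof -
  assume w: "w \<in> space \<mu>"
  have "\<forall>g h. \<forall>w\<in>space \<mu>. actG g (actH h w) = actH h (actG g w)"
    using C unfolding me_coupling_def by (elim conjE)
  then show ?thesis using w by blast
qed
lemma finG: "finite_measure \<nu>G" using C unfolding me_coupling_def by (elim conjE)
lemma finH: "finite_measure \<nu>H" using C unfolding me_coupling_def by (elim conjE)
lemma XGsub: "space \<nu>G \<subseteq> space \<mu>" using C unfolding me_coupling_def by (elim conjE)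
lemma XHsub: "space \<nu>H \<subseteq> space \<mu>" using C unfolding me_coupling_def by (elim conjE)
lemma isoG: "meas_iso (lamG \<Otimes>\<^sub>M \<nu>G) \<mu> (\<lambda>(g, x). actG g x)" using C unfolding me_coupling_def by (elim conjE)
lemma isoH: "meas_iso (lamH \<Otimes>\<^sub>M \<nu>H) \<mu> (\<lambda>(h, x). actH h x)" using C unfolding me_coupling_def by (elim conjE)

lemma actG_add: "w \<in> space \<mu> \<Longrightarrow> actG (g1 + g2) w = actG g1 (actG g2 w)"
  using mpG unfolding mp_action_def by blast
lemma actH_add: "w \<in> space \<mu> \<Longrightarrow> actH (g1 + g2) w = actH g1 (actH g2 w)"
  using mpH unfolding mp_action_def by blast
lemma actH_0: "w \<in> space \<mu> \<Longrightarrow> actH 0 w = w"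
  using mpH unfolding mp_action_def by blast
lemma actG_meas: "actG g \<in> \<mu> \<rightarrow>\<^sub>M \<mu>"
  using mpG unfolding mp_action_def by blast
lemma actG_space: "w \<in> space \<mu> \<Longrightarrow> actG g w \<in> space \<mu>"
  using measurable_space[OF actG_meas] by blast

lemma spH: "space lamH = UNIV" using sets_borel_space[OF SHb] .
lemma spG: "space lamG = UNIV" using sets_borel_space[OF SGb] .

lemma TH_bij: "bij_betw (\<lambda>(h, x). actH h x) (UNIV \<times> space \<nu>H) (space \<mu>)"
  using isoH unfolding meas_iso_def by (simp add: space_pair_measure spH)

lemma TH_meas: "(\<lambda>(h, x). actH h x) \<in> lamH \<Otimes>\<^sub>M \<nu>H \<rightarrow>\<^sub>M \<mu>"
  using isoH unfolding meas_iso_def by (elim conjE)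
lemma TH_distr: "distr (lamH \<Otimes>\<^sub>M \<nu>H) \<mu> (\<lambda>(h, x). actH h x) = \<mu>"
  using isoH unfolding meas_iso_def by (elim conjE)
lemma TG_meas: "(\<lambda>(g, x). actG g x) \<in> lamG \<Otimes>\<^sub>M \<nu>G \<rightarrow>\<^sub>M \<mu>"
  using isoG unfolding meas_iso_def by (elim conjE)
lemma TG_distr: "distr (lamG \<Otimes>\<^sub>M \<nu>G) \<mu> (\<lambda>(g, x). actG g x) = \<mu>"
  using isoG unfolding meas_iso_def by (elim conjE)

lemma invH_meas: "the_inv_into (UNIV \<times> space \<nu>H) (\<lambda>(h, x). actH h x) \<in> \<mu> \<rightarrow>\<^sub>M lamH \<Otimes>\<^sub>M \<nu>H"
proof -
  have "the_inv_into (space (lamH \<Otimes>\<^sub>M \<nu>H)) (\<lambda>(h, x). actH h x) \<in> \<mu> \<rightarrow>\<^sub>M lamH \<Otimes>\<^sub>M \<nu>H"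
    using isoH unfolding meas_iso_def by (elim conjE)
  then show ?thesis by (simp add: space_pair_measure spH)
qed

lemma TH_inj:
  assumes "x \<in> space \<nu>H" "y \<in> space \<nu>H" "actH h x = actH h' y"
  shows "h = h' \<and> x = y"
proof -
  have inj: "inj_on (\<lambda>(h, x). actH h x) (UNIV \<times> space \<nu>H)" using TH_bij by (rule bij_betw_imp_inj_on)
  have eq: "(\<lambda>(h, x). actH h x) (h, x) = (\<lambda>(h, x). actH h x) (h', y)" using assms(3) by simp
  have "(h, x) = (h', y)" by (rule inj_onD[OF inj eq]) (simp_all add: assms)
  then show ?thesis by simp
qed

lemma invH_prop:
  assumes w: "w \<in> space \<mu>"
  shows "snd (the_inv_into (UNIV \<times> space \<nu>H) (\<lambda>(h, x). actH h x) w) \<in> space \<nu>H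
    \<and> actH (fst (the_inv_into (UNIV \<times> space \<nu>H) (\<lambda>(h, x). actH h x) w))
           (snd (the_inv_into (UNIV \<times> space \<nu>H) (\<lambda>(h, x). actH h x) w)) = w"
proof -
  let ?p = "the_inv_into (UNIV \<times> space \<nu>H) (\<lambda>(h, x). actH h x) w"
  have wim: "w \<in> (\<lambda>(h, x). actH h x) ` (UNIV \<times> space \<nu>H)" using bij_betw_imp_surj_on[OF TH_bij] w by simp
  have pin: "?p \<in> UNIV \<times> space \<nu>H" by (rule the_inv_into_into[OF bij_betw_imp_inj_on[OF TH_bij] wim subset_refl])
  have pw: "(\<lambda>(h, x). actH h x) ?p = w"
    by (rule f_the_inv_into_f[OF bij_betw_imp_inj_on[OF TH_bij] wim])
  have "snd ?p \<in> space \<nu>H" using pin by (simp add: mem_Times_iff)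
  moreover have "actH (fst ?p) (snd ?p) = w" using pw by (simp add: split_beta)
  ultimately show ?thesis by blast
qed

lemma TH_surj:
  assumes w: "w \<in> space \<mu>"
  obtains h x where "x \<in> space \<nu>H" "w = actH h x"
proof -
  let ?p = "the_inv_into (UNIV \<times> space \<nu>H) (\<lambda>(h, x). actH h x) w"
  show ?thesis using that[of "snd ?p" "fst ?p"] invH_prop[OF w] by simp
qed

lemma ftilde_eq:
  assumes x: "x \<in> space \<nu>H"
  shows "ftilde actH (space \<nu>H) f (actH h x) = f (- h)"
proof -
  have "(THE h'. \<exists>x'\<in>space \<nu>H. actH h x = actH h' x') = h"
  proof (rule the_equality)
    show "\<exists>x'\<in>space \<nu>H. actH h x = actH h x'" using x by blast
    fix h' assume "\<exists>x'\<in>space \<nu>H. actH h x = actH h' x'"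
    then obtain x' where x': "x' \<in> space \<nu>H" "actH h x = actH h' x'" by blast
    then show "h' = h" using TH_inj[of x x' h h'] x by simp
  qed
  then show ?thesis unfolding ftilde_def by simp
qed

lemma ftilde_meas:
  assumes f: "f \<in> borel_measurable borel"
  shows "ftilde actH (space \<nu>H) f \<in> borel_measurable \<mu>"
proof -
  let ?inv = "the_inv_into (UNIV \<times> space \<nu>H) (\<lambda>(h, x). actH h x)"
  have m1: "(\<lambda>w. fst (?inv w)) \<in> \<mu> \<rightarrow>\<^sub>M lamH"
    using measurable_compose[OF invH_meas measurable_fst] by (simp add: o_def)
  then have m2: "(\<lambda>w. fst (?inv w)) \<in> borel_measurable \<mu>"
    using measurable_cong_sets[OF refl SHb] by blast
  have m3: "(\<lambda>w. f (- fst (?inv w))) \<in> borel_measurable \<mu>"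
    using f m2 by measurable
  show ?thesis
  proof (rule measurable_cong[THEN iffD1, OF _ m3])
    fix w assume w: "w \<in> space \<mu>"
    have "ftilde actH (space \<nu>H) f (actH (fst (?inv w)) (snd (?inv w))) = f (- fst (?inv w))"
      using invH_prop[OF w] by (intro ftilde_eq) simp
    then show "f (- fst (?inv w)) = ftilde actH (space \<nu>H) f w"
      using invH_prop[OF w] by simp
  qed
qed

lemma cocycle_eq:
  assumes x: "x \<in> space \<nu>H"
  obtains b y where "y \<in> space \<nu>H" "actG g x = actH b y" "cocycle actG actH (space \<nu>H) g x = - b"
proof -
  have gx: "actG g x \<in> space \<mu>" using actG_space XHsub x by blast
  obtain b y where bY: "y \<in> space \<nu>H" "actG g x = actH b y" using TH_surj[OF gx] by blast
  have yO: "y \<in> space \<mu>" using bY(1) XHsub by blast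
  have "(THE h. actH h (actG g x) \<in> space \<nu>H) = - b"
  proof (rule the_equality)
    show "actH (- b) (actG g x) \<in> space \<nu>H"
      using bY actH_add[OF yO, of "- b" b, symmetric] actH_0[OF yO] by simp
    fix h assume h: "actH h (actG g x) \<in> space \<nu>H"
    have e: "actH h (actG g x) = actH (h + b) y" using bY actH_add[OF yO] by simp
    have "actH 0 (actH h (actG g x)) = actH h (actG g x)" using h XHsub actH_0 by blast
    then have "actH (h + b) y = actH 0 (actH h (actG g x))" using e by simp
    then have "h + b = 0" using TH_inj[OF bY(1) h] by simp
    then show "h = - b" by (simp add: eq_neg_iff_add_eq_0)
  qed
  then have "cocycle actG actH (space \<nu>H) g x = - b" unfolding cocycle_def .
  then show ?thesis using that bY by blast
qed

end




context coup begin

lemma key_inner: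
  assumes x: "x \<in> space \<nu>H" and f: "f \<in> borel_measurable borel"
  shows "(\<integral>\<^sup>+h. ennreal \<bar>ftilde actH (space \<nu>H) f (actH h x) - ftilde actH (space \<nu>H) f (actG (-s) (actH h x))\<bar> \<partial>lamH)
    = Qf lamH f (cocycle actG actH (space \<nu>H) (-s) x)"
proof -
  obtain b y where bY: "y \<in> space \<nu>H" "actG (-s) x = actH b y" "cocycle actG actH (space \<nu>H) (-s) x = - b"
    by (rule cocycle_eq[OF x])
  have xO: "x \<in> space \<mu>" using x XHsub by blast
  have yO: "y \<in> space \<mu>" using bY(1) XHsub by blast
  have pt: "ftilde actH (space \<nu>H) f (actG (-s) (actH h x)) = f (- b + - h)" for h
  proof -
    have "actG (-s) (actH h x) = actH h (actG (-s) x)" by (rule comm[OF xO])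
    also have "\<dots> = actH (h + b) y" using bY(2) actH_add[OF yO] by simp
    finally have "ftilde actH (space \<nu>H) f (actG (-s) (actH h x)) = f (- (h + b))"
      using ftilde_eq[OF bY(1)] by simp
    then show ?thesis by (simp add: minus_add)
  qed
  have "(\<integral>\<^sup>+h. ennreal \<bar>ftilde actH (space \<nu>H) f (actH h x) - ftilde actH (space \<nu>H) f (actG (-s) (actH h x))\<bar> \<partial>lamH)
      = (\<integral>\<^sup>+h. ennreal \<bar>f (- h) - f (- b + - h)\<bar> \<partial>lamH)"
    using ftilde_eq[OF x] pt by simp
  also have "\<dots> = (\<integral>\<^sup>+k. ennreal \<bar>f k - f (- b + k)\<bar> \<partial>lamH)"
    by (rule nn_distr_gen[OF invH SHb, where F = "\<lambda>k. ennreal \<bar>f k - f (- b + k)\<bar>"]) (use f in measurable)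
  also have "\<dots> = Qf lamH f (- b)" unfolding Qf_def ..
  finally show ?thesis using bY(3) by simp
qed

lemma chain_s:
  assumes f: "f \<in> borel_measurable borel"
  shows "(\<integral>\<^sup>+x. L1norm lamG (\<lambda>g. fx actG actH (space \<nu>H) f x g - ltrans s (fx actG actH (space \<nu>H) f x) g) \<partial>\<nu>G)
    = (\<integral>\<^sup>+y. Qf lamH f (cocycle actG actH (space \<nu>H) (-s) y) \<partial>\<nu>H)"
proof -
  define Fs where "Fs = (\<lambda>w. ennreal \<bar>ftilde actH (space \<nu>H) f w - ftilde actH (space \<nu>H) f (actG (-s) w)\<bar>)"
  have Fm: "Fs \<in> borel_measurable \<mu>"
  proof -
    note [measurable] = ftilde_meas[OF f] actG_meas
    show ?thesis unfolding Fs_def by measurable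
  qed
  interpret PG: pair_sigma_finite lamG \<nu>G using pair_sf[OF sfG fin_sf[OF finG]] .
  interpret PH: pair_sigma_finite lamH \<nu>H using pair_sf[OF sfH fin_sf[OF finH]] .
  have "(\<integral>\<^sup>+x. L1norm lamG (\<lambda>g. fx actG actH (space \<nu>H) f x g - ltrans s (fx actG actH (space \<nu>H) f x) g) \<partial>\<nu>G)
      = (\<integral>\<^sup>+x. (\<integral>\<^sup>+g. Fs (actG g x) \<partial>lamG) \<partial>\<nu>G)"
  proof (rule nn_integral_cong)
    fix x assume x: "x \<in> space \<nu>G"
    then have xO: "x \<in> space \<mu>" using XGsub by blast
    show "L1norm lamG (\<lambda>g. fx actG actH (space \<nu>H) f x g - ltrans s (fx actG actH (space \<nu>H) f x) g)
        = (\<integral>\<^sup>+g. Fs (actG g x) \<partial>lamG)"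
      unfolding L1norm_def fx_def ltrans_def Fs_def using actG_add[OF xO] by simp
  qed
  also have "\<dots> = integral\<^sup>N (lamG \<Otimes>\<^sub>M \<nu>G) (\<lambda>p. Fs (case p of (g, x) \<Rightarrow> actG g x))"
  proof -
    have "(\<lambda>p. Fs (case p of (g, x) \<Rightarrow> actG g x)) \<in> borel_measurable (lamG \<Otimes>\<^sub>M \<nu>G)"
      using measurable_compose[OF TG_meas Fm] by (simp add: o_def)
    from PG.nn_integral_snd[OF this] show ?thesis by simp
  qed
  also have "\<dots> = integral\<^sup>N \<mu> Fs"
  proof -
    have "integral\<^sup>N \<mu> Fs = integral\<^sup>N (distr (lamG \<Otimes>\<^sub>M \<nu>G) \<mu> (\<lambda>(g, x). actG g x)) Fs"
      using TG_distr by simp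
    also have "\<dots> = integral\<^sup>N (lamG \<Otimes>\<^sub>M \<nu>G) (\<lambda>p. Fs (case p of (g, x) \<Rightarrow> actG g x))"
      by (rule nn_integral_distr[OF TG_meas]) (use Fm in simp)
    finally show ?thesis by simp
  qed
  also have "\<dots> = integral\<^sup>N (lamH \<Otimes>\<^sub>M \<nu>H) (\<lambda>p. Fs (case p of (h, x) \<Rightarrow> actH h x))"
  proof -
    have "integral\<^sup>N \<mu> Fs = integral\<^sup>N (distr (lamH \<Otimes>\<^sub>M \<nu>H) \<mu> (\<lambda>(h, x). actH h x)) Fs"
      using TH_distr by simp
    also have "\<dots> = integral\<^sup>N (lamH \<Otimes>\<^sub>M \<nu>H) (\<lambda>p. Fs (case p of (h, x) \<Rightarrow> actH h x))"
      by (rule nn_integral_distr[OF TH_meas]) (use Fm in simp)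
    finally show ?thesis .
  qed
  also have "\<dots> = (\<integral>\<^sup>+y. (\<integral>\<^sup>+h. Fs (actH h y) \<partial>lamH) \<partial>\<nu>H)"
  proof -
    have "(\<lambda>p. Fs (case p of (h, x) \<Rightarrow> actH h x)) \<in> borel_measurable (lamH \<Otimes>\<^sub>M \<nu>H)"
      using measurable_compose[OF TH_meas Fm] by (simp add: o_def)
    from PH.nn_integral_snd[OF this] show ?thesis by simp
  qed
  also have "\<dots> = (\<integral>\<^sup>+y. Qf lamH f (cocycle actG actH (space \<nu>H) (-s) y) \<partial>\<nu>H)"
  proof (rule nn_integral_cong)
    fix y assume y: "y \<in> space \<nu>H"
    show "(\<integral>\<^sup>+h. Fs (actH h y) \<partial>lamH) = Qf lamH f (cocycle actG actH (space \<nu>H) (-s) y)"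
      unfolding Fs_def by (rule key_inner[OF y f])
  qed
  finally show ?thesis .
qed

lemma lhs_eq:
  assumes f: "f \<in> borel_measurable borel" and SGs: "SG \<in> sets borel"
  shows "(\<integral>\<^sup>+x. grad_int lamG SG (fx actG actH (space \<nu>H) f x) \<partial>\<nu>G)
    = (\<integral>\<^sup>+s. indicator SG s * (\<integral>\<^sup>+y. Qf lamH f (cocycle actG actH (space \<nu>H) (-s) y) \<partial>\<nu>H) \<partial>lamG)"
proof -
  define K where "K = (\<lambda>x s. L1norm lamG (\<lambda>g. fx actG actH (space \<nu>H) f x g - ltrans s (fx actG actH (space \<nu>H) f x) g) * indicator SG s)"
  define J where "J = (\<lambda>p g. ennreal \<bar>ftilde actH (space \<nu>H) f (actG g (fst p)) - ftilde actH (space \<nu>H) f (actG (- snd p + g) (fst p))\<bar>)"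
  have KJ: "K x s = (\<integral>\<^sup>+g. J (x, s) g \<partial>lamG) * indicator SG s" for x s
    unfolding K_def J_def L1norm_def fx_def ltrans_def by simp
  interpret PGn: pair_sigma_finite \<nu>G lamG using pair_sf[OF fin_sf[OF finG] sfG] .
  have Jm: "case_prod J \<in> borel_measurable ((\<nu>G \<Otimes>\<^sub>M lamG) \<Otimes>\<^sub>M lamG)"
  proof -
    note [measurable] = ftilde_meas[OF f] TG_meas snd_borel[OF SGb]
    have ma: "(\<lambda>q. (snd q, fst (fst q))) \<in> (\<nu>G \<Otimes>\<^sub>M lamG) \<Otimes>\<^sub>M lamG \<rightarrow>\<^sub>M lamG \<Otimes>\<^sub>M \<nu>G"
      by measurable
    have b1: "(\<lambda>q. snd (fst q)) \<in> borel_measurable ((\<nu>G \<Otimes>\<^sub>M lamG) \<Otimes>\<^sub>M lamG)"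
      using measurable_compose[OF measurable_fst snd_borel[OF SGb]] by (simp add: o_def)
    have b2: "(\<lambda>q. - snd (fst q) + snd q) \<in> borel_measurable ((\<nu>G \<Otimes>\<^sub>M lamG) \<Otimes>\<^sub>M lamG)"
      using b1 by measurable
    then have b3: "(\<lambda>q. - snd (fst q) + snd q) \<in> (\<nu>G \<Otimes>\<^sub>M lamG) \<Otimes>\<^sub>M lamG \<rightarrow>\<^sub>M lamG"
      using measurable_cong_sets[OF refl SGb] by blast
    have mb: "(\<lambda>q. (- snd (fst q) + snd q, fst (fst q))) \<in> (\<nu>G \<Otimes>\<^sub>M lamG) \<Otimes>\<^sub>M lamG \<rightarrow>\<^sub>M lamG \<Otimes>\<^sub>M \<nu>G"
      using b3 by measurable
    have ta: "(\<lambda>q. actG (snd q) (fst (fst q))) \<in> (\<nu>G \<Otimes>\<^sub>M lamG) \<Otimes>\<^sub>M lamG \<rightarrow>\<^sub>M \<mu>"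
      using measurable_compose[OF ma TG_meas] by (simp add: o_def)
    have tb: "(\<lambda>q. actG (- snd (fst q) + snd q) (fst (fst q))) \<in> (\<nu>G \<Otimes>\<^sub>M lamG) \<Otimes>\<^sub>M lamG \<rightarrow>\<^sub>M \<mu>"
      using measurable_compose[OF mb TG_meas] by (simp add: o_def)
    show ?thesis unfolding J_def split_beta' using ta tb by measurable
  qed
  have Km: "case_prod K \<in> borel_measurable (\<nu>G \<Otimes>\<^sub>M lamG)"
  proof -
    have i1: "(\<lambda>p. \<integral>\<^sup>+g. J p g \<partial>lamG) \<in> borel_measurable (\<nu>G \<Otimes>\<^sub>M lamG)"
      by (rule sigma_finite_measure.borel_measurable_nn_integral[OF sfG Jm])
    have SGl: "SG \<in> sets lamG" using SGs SGb by simp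
    have i2: "(\<lambda>p. indicator SG (snd p) :: ennreal) \<in> borel_measurable (\<nu>G \<Otimes>\<^sub>M lamG)"
      using SGl by measurable
    have "(\<lambda>p. (\<integral>\<^sup>+g. J p g \<partial>lamG) * indicator SG (snd p)) \<in> borel_measurable (\<nu>G \<Otimes>\<^sub>M lamG)"
      using i1 i2 by measurable
    then show ?thesis using KJ by (simp add: split_beta')
  qed
  have "(\<integral>\<^sup>+x. grad_int lamG SG (fx actG actH (space \<nu>H) f x) \<partial>\<nu>G) = (\<integral>\<^sup>+x. (\<integral>\<^sup>+s. K x s \<partial>lamG) \<partial>\<nu>G)"
    unfolding grad_int_def K_def ..
  also have "\<dots> = (\<integral>\<^sup>+s. (\<integral>\<^sup>+x. K x s \<partial>\<nu>G) \<partial>lamG)"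
    using PGn.Fubini'[OF Km] by simp
  also have "\<dots> = (\<integral>\<^sup>+s. indicator SG s * (\<integral>\<^sup>+y. Qf lamH f (cocycle actG actH (space \<nu>H) (-s) y) \<partial>\<nu>H) \<partial>lamG)"
  proof (rule nn_integral_cong)
    fix s
    show "(\<integral>\<^sup>+x. K x s \<partial>\<nu>G) = indicator SG s * (\<integral>\<^sup>+y. Qf lamH f (cocycle actG actH (space \<nu>H) (-s) y) \<partial>\<nu>H)"
    proof (cases "s \<in> SG")
      case True
      then show ?thesis unfolding K_def using chain_s[OF f, of s] by simp
    next
      case False
      then show ?thesis unfolding K_def by simp
    qed
  qed
  finally show ?thesis .
qed

end


theorem mainTheorem14:
  fixes lamG :: "'g::{topological_group_add, t2_space, second_countable_topology} measure"
    and lamH :: "'h::{topological_group_add, t2_space, second_countable_topology} measure"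
    and \<mu> \<nu>G \<nu>H :: "'w measure"
    and actG :: "'g \<Rightarrow> 'w \<Rightarrow> 'w" and actH :: "'h \<Rightarrow> 'w \<Rightarrow> 'w"
    and SG :: "'g set" and SH :: "'h set"
    and \<phi> :: "real \<Rightarrow> real" and f :: "'h \<Rightarrow> real"
  assumes "lcsc_group TYPE('g)" and "lcsc_group TYPE('h)"
    and "non_discrete TYPE('g)" and "non_discrete TYPE('h)"
    and "unimodular_haar lamG" and "unimodular_haar lamH"
    and "compact_generating_set SG" and "compact_generating_set SH"
    and "me_coupling lamG lamH \<mu> actG actH \<nu>G \<nu>H"
    and "\<forall>t\<ge>0. \<phi> t \<ge> 0" and "\<forall>t>0. \<phi> t > 0"
    and "mono_on {0..} \<phi>"
    and "mono_on {0<..} (\<lambda>t. t / \<phi> t)"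
    and "integrable lamH f"
    and "emeasure lamH {h. f h \<noteq> 0} < \<infinity>"
    and "(\<integral>\<^sup>+ s \<in> SG. (\<integral>\<^sup>+ x. ennreal (\<phi> (real (word_length SH (cocycle actG actH (space \<nu>H) (- s) x))
              * enn2real (grad_sup lamH SH f))) \<partial>\<nu>H) \<partial>lamG) < \<infinity>"
  shows "(\<integral>\<^sup>+ x. grad_int lamG SG (fx actG actH (space \<nu>H) f x) \<partial>\<nu>G)
    \<le> (\<integral>\<^sup>+ s \<in> SG. (\<integral>\<^sup>+ x. ennreal (\<phi> (real (word_length SH (cocycle actG actH (space \<nu>H) (- s) x))
              * enn2real (grad_sup lamH SH f))) \<partial>\<nu>H) \<partial>lamG)
       * ennreal (2 * (\<integral> h. \<bar>f h\<bar> \<partial>lamH) / \<phi> (2 * (\<integral> h. \<bar>f h\<bar> \<partial>lamH)))"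
proof -
  note A = assms
  have HG: "haar_measure lamG" using unimod_haar[OF A(5)] .
  have HH: "haar_measure lamH" using unimod_haar[OF A(6)] .
  have SGb: "sets lamG = sets borel" using haar_sets[OF HG] .
  have SHb: "sets lamH = sets borel" using haar_sets[OF HH] .
  have LG: "locally_compact_space (euclidean :: 'g topology)" using A(1) unfolding lcsc_group_def .
  have LH: "locally_compact_space (euclidean :: 'h topology)" using A(2) unfolding lcsc_group_def .
  have sfG: "sigma_finite_measure lamG" using haar_sigma_finite[OF HG LG] .
  have sfH: "sigma_finite_measure lamH" using haar_sigma_finite[OF HH LH] .
  have invH: "distr lamH lamH uminus = lamH" using haar_distr_uminus[OF A(6) LH] .
  interpret CP: coup lamG lamH \<mu> \<nu>G \<nu>H actG actH
    by (rule coup.intro[OF A(9) SGb SHb sfG sfH invH])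
  have fint: "integrable lamH f" using A(14) .
  have fb: "f \<in> borel_measurable borel"
    using borel_measurable_integrable[OF fint] measurable_cong_sets[OF SHb refl] by blast
  have SGs: "SG \<in> sets borel"
    using A(7) unfolding compact_generating_set_def by (simp add: compact_imp_closed borel_closed)
  define N where "N = (\<integral> h. \<bar>f h\<bar> \<partial>lamH)"
  have N0: "N \<ge> 0" unfolding N_def by simp
  have nnN: "(\<integral>\<^sup>+k. ennreal \<bar>f k\<bar> \<partial>lamH) = ennreal N"
    unfolding N_def by (rule nn_integral_eq_integral) (use integrable_abs[OF fint] in auto)
  have e2: "ennreal (2 * N) = 2 * ennreal N" using N0 by (simp add: ennreal_mult)
  define D where "D = enn2real (grad_sup lamH SH f)"
  have gs_le: "grad_sup lamH SH f \<le> ennreal (2 * N)"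
    using grad_sup_bound[OF HH fb, of SH] nnN e2 by simp
  then have gsD: "grad_sup lamH SH f = ennreal D"
    unfolding D_def by (metis ennreal_enn2real ennreal_less_top order_le_less_trans less_irrefl)
  define c where "c = 2 * N / \<phi> (2 * N)"
  have p2N: "\<phi> (2 * N) \<ge> 0" using A(10) N0 by simp
  have c0: "c \<ge> 0" unfolding c_def using N0 p2N by simp
  have D0: "D \<ge> 0" unfolding D_def by simp
  have pw: "Qf lamH f a \<le> ennreal (\<phi> (real (word_length SH a) * D)) * ennreal c" for a
  proof -
    define x where "x = real (word_length SH a) * D"
    have x0: "x \<ge> 0" unfolding x_def using D0 by simp
    have q1: "Qf lamH f a \<le> ennreal x"
    proof -
      have "Qf lamH f a \<le> of_nat (word_length SH a) * grad_sup lamH SH f"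
        by (rule Qf_bound_len[OF HH fb A(8)])
      also have "\<dots> = ennreal x" unfolding x_def gsD using D0 by (simp add: ennreal_mult ennreal_of_nat_eq_real_of_nat)
      finally show ?thesis .
    qed
    have q2: "Qf lamH f a \<le> ennreal (2 * N)"
      using Qf_bound_norm[OF HH fb, of a] nnN e2 by simp
    have q3: "Qf lamH f a \<le> ennreal (min x (2 * N))"
      using q1 q2 by (simp add: min_def)
    have "min x (2 * N) \<le> \<phi> x * (2 * N / \<phi> (2 * N))"
      by (rule phi_ineq[OF A(10) A(11) A(12) A(13) x0]) (use N0 in simp)
    then have "ennreal (min x (2 * N)) \<le> ennreal (\<phi> x * c)" unfolding c_def by (rule ennreal_leI)
    also have "\<dots> = ennreal (\<phi> x) * ennreal c" using A(10) x0 c0 by (simp add: ennreal_mult)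
    finally show ?thesis using q3 unfolding x_def by simp
  qed
  define Y where "Y = (\<lambda>s. (\<integral>\<^sup>+ x. ennreal (\<phi> (real (word_length SH (cocycle actG actH (space \<nu>H) (- s) x))
              * enn2real (grad_sup lamH SH f))) \<partial>\<nu>H))"
  have "(\<integral>\<^sup>+x. grad_int lamG SG (fx actG actH (space \<nu>H) f x) \<partial>\<nu>G)
     = (\<integral>\<^sup>+s. indicator SG s * (\<integral>\<^sup>+y. Qf lamH f (cocycle actG actH (space \<nu>H) (-s) y) \<partial>\<nu>H) \<partial>lamG)"
    by (rule CP.lhs_eq[OF fb SGs])
  also have "\<dots> \<le> (\<integral>\<^sup>+s. indicator SG s * (Y s * ennreal c) \<partial>lamG)"
  proof (rule nn_integral_mono)
    fix s
    have "(\<integral>\<^sup>+y. Qf lamH f (cocycle actG actH (space \<nu>H) (-s) y) \<partial>\<nu>H)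
        \<le> (\<integral>\<^sup>+y. ennreal (\<phi> (real (word_length SH (cocycle actG actH (space \<nu>H) (-s) y)) * D)) * ennreal c \<partial>\<nu>H)"
      by (rule nn_integral_mono) (rule pw)
    also have "\<dots> \<le> Y s * ennreal c"
      unfolding Y_def D_def by (rule nn_integral_multc_le[OF c0])
    finally show "indicator SG s * (\<integral>\<^sup>+y. Qf lamH f (cocycle actG actH (space \<nu>H) (-s) y) \<partial>\<nu>H)
        \<le> indicator SG s * (Y s * ennreal c)"
      by (rule mult_left_mono) simp
  qed
  also have "\<dots> = (\<integral>\<^sup>+s. (Y s * indicator SG s) * ennreal c \<partial>lamG)"
    by (simp add: ac_simps)
  also have "\<dots> \<le> (\<integral>\<^sup>+s. Y s * indicator SG s \<partial>lamG) * ennreal c"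
    by (rule nn_integral_multc_le[OF c0])
  finally show ?thesis unfolding Y_def c_def N_def .
qed

end
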